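(* Let $X$ be a metric space and $x\in X$. Assume (a) there exist constants $c\ge1$, $a\in(0,1]$ such that for all $r\le a$, $\lambda,\mu\le1$ and $y,z\in B_X(x,r)$, $n(\lambda\mu r,B_X(y,\lambda r))\le c\,n(\lambda\mu r,B_X(z,\lambda r))$; and (b) $\limsup_{r\to0}n_{\lambda r}(\overline{B}_X(x,r))<\infty$ for all $\lambda>0$. Define $g(t,h)=\log n(e^{-(t+h)},B_X(x,e^{-t}))$ and $dg(t,h,k)=g(t,h+k)-g(t+h,k)-g(t,h)$. Then there is $t_0$ such that $dg$ is bounded on $\{(t,h,k):t>t_0,\ h,k>0\}$.
   Context: $B_X(x,r)$ is the open ball, $\overline{B}_X(x,r)$ the closed ball; $n(s,A)=n_s(A)$ is the minimum number of open balls of radius $s$ needed to cover $A$. *)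

theory Defs
  imports "HOL-Analysis.Analysis"
begin

definition cover_num :: "real \<Rightarrow> 'a::metric_space set \<Rightarrow> enat" where
  "cover_num s A = (INF C \<in> {C. finite C \<and> A \<subseteq> (\<Union>c\<in>C. ball c s)}. enat (card C))"

definition g_fun :: "'a::metric_space \<Rightarrow> real \<Rightarrow> real \<Rightarrow> real" where
  "g_fun x t h = ln (real (the_enat (cover_num (exp (-(t+h))) (ball x (exp (-t))))))"

definition dg_fun :: "'a::metric_space \<Rightarrow> real \<Rightarrow> real \<Rightarrow> real \<Rightarrow> real" where
  "dg_fun x t h k = g_fun x t (h+k) - g_fun x (t+h) k - g_fun x t h"

end

theory Submission
  imports Defs
begin


lemma cn_le:
  assumes "finite C" "A \<subseteq> (\<Union>c\<in>C. ball c s)"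
  shows "cover_num s A \<le> enat (card C)"
  unfolding cover_num_def using assms by (auto intro!: INF_lower2[of C])

lemma cn_attain:
  assumes "cover_num s A \<noteq> \<infinity>"
  shows "\<exists>C. finite C \<and> A \<subseteq> (\<Union>c\<in>C. ball c s) \<and> enat (card C) = cover_num s A"
proof -
  let ?S = "enat ` card ` {C. finite C \<and> A \<subseteq> (\<Union>c\<in>C. ball c s)}"
  have eq: "cover_num s A = Inf ?S" unfolding cover_num_def by (simp add: image_image)
  have ne: "?S \<noteq> {}"
  proof
    assume e: "?S = {}" have "cover_num s A = \<infinity>" unfolding eq e by (simp add: top_enat_def)
    with assms show False by simp
  qed
  obtain z where "z \<in> ?S" using ne by blast
  then have "(LEAST x. x \<in> ?S) \<in> ?S" by (rule LeastI)
  moreover have "Inf ?S = (LEAST x. x \<in> ?S)" unfolding Inf_enat_def by (simp only: ne if_False)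
  ultimately have "Inf ?S \<in> ?S" by simp
  then show ?thesis unfolding eq by auto
qed

lemma cn_mono_set:
  assumes "A \<subseteq> B" shows "cover_num s A \<le> cover_num s B"
  unfolding cover_num_def using assms
  by (intro INF_mono) auto

lemma cn_mono_rad:
  assumes "s \<le> s'" shows "cover_num s' A \<le> cover_num s A"
  unfolding cover_num_def using assms
  by (intro INF_mono) (force intro: ball_subset_ball_iff)

lemma cn_pos:
  assumes "A \<noteq> {}" shows "1 \<le> cover_num s A"
  unfolding cover_num_def using assms
  by (intro INF_greatest) (auto simp: Suc_le_eq card_gt_0_iff one_enat_def)

lemma cn_small:
  assumes "A \<subseteq> ball x s" shows "cover_num s A \<le> 1"
  using cn_le[of "{x}" A s] assms by (simp add: one_enat_def)

lemma cn_sub: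
  assumes "finite Y" "A \<subseteq> (\<Union>y\<in>Y. ball y s1)"
  shows "cover_num s2 A \<le> (\<Sum>y\<in>Y. cover_num s2 (ball y s1))"
proof (cases "\<exists>y\<in>Y. cover_num s2 (ball y s1) = \<infinity>")
  case True
  then obtain y0 where y0: "y0 \<in> Y" "cover_num s2 (ball y0 s1) = \<infinity>" by auto
  have "(\<Sum>y\<in>Y. cover_num s2 (ball y s1)) = cover_num s2 (ball y0 s1) + (\<Sum>y\<in>Y-{y0}. cover_num s2 (ball y s1))"
    using assms(1) y0(1) by (rule sum.remove)
  then show ?thesis using y0 by simp
next
  case False
  then have "\<forall>y\<in>Y. \<exists>C. finite C \<and> ball y s1 \<subseteq> (\<Union>c\<in>C. ball c s2) \<and> enat (card C) = cover_num s2 (ball y s1)"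
    using cn_attain by blast
  then obtain C where C: "\<And>y. y \<in> Y \<Longrightarrow> finite (C y) \<and> ball y s1 \<subseteq> (\<Union>c\<in>C y. ball c s2) \<and> enat (card (C y)) = cover_num s2 (ball y s1)"
    by metis
  have fin: "finite (\<Union>y\<in>Y. C y)" using C assms(1) by auto
  have cov: "A \<subseteq> (\<Union>c\<in>(\<Union>y\<in>Y. C y). ball c s2)" using assms(2) C by fastforce
  have "cover_num s2 A \<le> enat (card (\<Union>y\<in>Y. C y))" by (rule cn_le[OF fin cov])
  also have "\<dots> \<le> enat (\<Sum>y\<in>Y. card (C y))" using card_UN_le[OF assms(1)] by simp
  also have "\<dots> = (\<Sum>y\<in>Y. enat (card (C y)))" by (simp add: of_nat_eq_enat[symmetric])
  also have "\<dots> = (\<Sum>y\<in>Y. cover_num s2 (ball y s1))" using C by (intro sum.cong) auto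
  finally show ?thesis .
qed



lemma cn_comp:
  fixes x :: "'a::metric_space"
  assumes Ha: "\<forall>r l m y z. 0 < r \<and> r \<le> a \<and> 0 < l \<and> l \<le> 1 \<and> 0 < m \<and> m \<le> 1 \<and>
         y \<in> ball x r \<and> z \<in> ball x r \<longrightarrow>
         ennreal_of_enat (cover_num (l*m*r) (ball y (l*r)))
           \<le> ennreal c * ennreal_of_enat (cover_num (l*m*r) (ball z (l*r)))"
  and AR: "A \<subseteq> ball x R" and fY: "finite Y" and cov: "A \<subseteq> (\<Union>y\<in>Y. ball y \<sigma>)"
  and s: "0 < s" "s \<le> \<sigma>" "\<sigma> \<le> R" "2*R \<le> a"
  shows "ennreal_of_enat (cover_num s A) \<le> of_nat (card Y) * ennreal c * ennreal_of_enat (cover_num s (ball x \<sigma>))"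
proof -
  define Y' where "Y' = {y\<in>Y. ball y \<sigma> \<inter> A \<noteq> {}}"
  have fY': "finite Y'" using fY unfolding Y'_def by auto
  have cov': "A \<subseteq> (\<Union>y\<in>Y'. ball y \<sigma>)" using cov unfolding Y'_def by blast
  have cY: "card Y' \<le> card Y" using fY unfolding Y'_def by (intro card_mono) auto
  have tm: "ennreal_of_enat (cover_num s (ball y \<sigma>)) \<le> ennreal c * ennreal_of_enat (cover_num s (ball x \<sigma>))"
    if y: "y \<in> Y'" for y
  proof -
    from y obtain w where w: "w \<in> A" "dist y w < \<sigma>" unfolding Y'_def by (auto simp: dist_commute)
    have "dist x w < R" using AR w by auto
    then have yb: "y \<in> ball x (2*R)" using w(2) s dist_triangle[of x y w] by (auto simp: dist_commute)
    have R0: "0 < R" using s by auto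
    have e1: "(\<sigma>/(2*R)) * (s/\<sigma>) * (2*R) = s" using s R0 by (simp add: field_simps)
    have e2: "(\<sigma>/(2*R)) * (2*R) = \<sigma>" using R0 by simp
    have "ennreal_of_enat (cover_num ((\<sigma>/(2*R)) * (s/\<sigma>) * (2*R)) (ball y ((\<sigma>/(2*R)) * (2*R))))
       \<le> ennreal c * ennreal_of_enat (cover_num ((\<sigma>/(2*R)) * (s/\<sigma>) * (2*R)) (ball x ((\<sigma>/(2*R)) * (2*R))))"
      using Ha[rule_format, of "2*R" "\<sigma>/(2*R)" "s/\<sigma>" y x] s R0 yb by auto
    then show ?thesis unfolding e1 e2 .
  qed
  have "ennreal_of_enat (cover_num s A) \<le> ennreal_of_enat (\<Sum>y\<in>Y'. cover_num s (ball y \<sigma>))"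
    using cn_sub[OF fY' cov'] by simp
  also have "\<dots> = (\<Sum>y\<in>Y'. ennreal_of_enat (cover_num s (ball y \<sigma>)))" by simp
  also have "\<dots> \<le> (\<Sum>y\<in>Y'. ennreal c * ennreal_of_enat (cover_num s (ball x \<sigma>)))"
    using tm by (intro sum_mono) auto
  also have "\<dots> = of_nat (card Y') * (ennreal c * ennreal_of_enat (cover_num s (ball x \<sigma>)))" by simp
  also have "\<dots> \<le> of_nat (card Y) * (ennreal c * ennreal_of_enat (cover_num s (ball x \<sigma>)))"
    using cY by (intro mult_right_mono) auto
  finally show ?thesis by (simp add: mult.assoc)
qed



definition nr :: "real \<Rightarrow> 'a::metric_space set \<Rightarrow> real" where
  "nr s A = real (the_enat (cover_num s A))"

lemma E_eq: "cover_num s A \<noteq> \<infinity> \<Longrightarrow> ennreal_of_enat (cover_num s A) = ennreal (nr s A)"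
  unfolding nr_def by (cases "cover_num s A") (auto simp: ennreal_of_nat_eq_real_of_nat)

lemma nr_nonneg: "0 \<le> nr s A" unfolding nr_def by simp

lemma E_lessD: assumes "ennreal_of_enat (cover_num s A) < ennreal M"
  shows "cover_num s A \<noteq> \<infinity>" "nr s A < M"
proof -
  show f: "cover_num s A \<noteq> \<infinity>"
  proof
    assume "cover_num s A = \<infinity>"
    with assms have "(top::ennreal) < ennreal M" by simp
    then show False by simp
  qed
  have "ennreal (nr s A) < ennreal M" using assms E_eq[OF f] by simp
  then show "nr s A < M" using nr_nonneg[of s A] ennreal_less_iff by blast
qed

lemma nr_le_E: assumes "cover_num s B \<noteq> \<infinity>" "cover_num s A \<le> cover_num s B"
  shows "cover_num s A \<noteq> \<infinity>" "nr s A \<le> nr s B"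
proof -
  show f: "cover_num s A \<noteq> \<infinity>" using assms using enat_ile by fastforce
  show "nr s A \<le> nr s B" using assms f unfolding nr_def
    by (cases "cover_num s A"; cases "cover_num s B") auto
qed

lemma nr_le_rad: assumes "cover_num s B \<noteq> \<infinity>" "cover_num s' A \<le> cover_num s B"
  shows "cover_num s' A \<noteq> \<infinity>" "nr s' A \<le> nr s B"
proof -
  show f: "cover_num s' A \<noteq> \<infinity>" using assms using enat_ile by fastforce
  show "nr s' A \<le> nr s B" using assms f unfolding nr_def
    by (cases "cover_num s' A"; cases "cover_num s B") auto
qed

lemma nr_pos: "A \<noteq> {} \<Longrightarrow> cover_num s A \<noteq> \<infinity> \<Longrightarrow> 1 \<le> nr s A"
  using cn_pos[of A s] unfolding nr_def
  by (cases "cover_num s A") (auto simp: one_enat_def)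

lemma limsup_bound:
  fixes f :: "real \<Rightarrow> ennreal"
  assumes "Limsup (at_right 0) f < \<infinity>"
  shows "\<exists>M \<delta>. 0 < \<delta> \<and> (\<forall>r. 0 < r \<and> r < \<delta> \<longrightarrow> f r < ennreal M)"
proof -
  define L where "L = Limsup (at_right 0) f"
  have "L < top" using assms unfolding L_def by simp
  then have eL: "ennreal (enn2real L) = L" by simp
  have "L < ennreal (enn2real L + 1)"
    by (subst eL[symmetric]) (simp add: ennreal_less_iff)
  then have "eventually (\<lambda>r. f r < ennreal (enn2real L + 1)) (at_right 0)"
    unfolding L_def by (rule Limsup_lessD)
  then obtain b where "b > 0" "\<forall>r>0. r < b \<longrightarrow> f r < ennreal (enn2real L + 1)"
    unfolding eventually_at_right_field by auto
  then show ?thesis by blast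
qed



lemma conv3: assumes "ennreal u \<le> ennreal p * ennreal q * ennreal w" "0 \<le> p" "0 \<le> q" "0 \<le> w"
  shows "u \<le> p * q * w"
proof -
  have "ennreal (p*q*w) = ennreal p * ennreal q * ennreal w" using assms by (simp add: ennreal_mult)
  with assms have "ennreal u \<le> ennreal (p*q*w)" by simp
  then show ?thesis using assms by simp
qed

locale cctx =
  fixes x :: "'a::metric_space" and c a M \<delta> :: real
  assumes Ha: "\<forall>r l m y z. 0 < r \<and> r \<le> a \<and> 0 < l \<and> l \<le> 1 \<and> 0 < m \<and> m \<le> 1 \<and>
         y \<in> ball x r \<and> z \<in> ball x r \<longrightarrow>
         ennreal_of_enat (cover_num (l*m*r) (ball y (l*r)))
           \<le> ennreal c * ennreal_of_enat (cover_num (l*m*r) (ball z (l*r)))"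
    and c1: "1 \<le> c" and \<delta>0: "0 < \<delta>" and \<delta>a: "2*\<delta> \<le> a"
    and Mb: "\<forall>r. 0 < r \<and> r < \<delta> \<longrightarrow> ennreal_of_enat (cover_num ((1/6)*r) (cball x r)) < ennreal M"
begin

lemma Mb': "0 < r \<Longrightarrow> r < \<delta> \<Longrightarrow> cover_num (r/6) (cball x r) \<noteq> \<infinity> \<and> nr (r/6) (cball x r) < M"
  using Mb E_lessD[of "r/6" "cball x r" M] by auto

lemma Mcov: assumes "0 < r" "r < \<delta>"
  shows "\<exists>Y. finite Y \<and> cball x r \<subseteq> (\<Union>y\<in>Y. ball y (r/6)) \<and> real (card Y) \<le> M"
proof -
  from Mb'[OF assms] have f: "cover_num (r/6) (cball x r) \<noteq> \<infinity>" and n: "nr (r/6) (cball x r) < M" by auto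
  from cn_attain[OF f] obtain Y where Y: "finite Y" "cball x r \<subseteq> (\<Union>y\<in>Y. ball y (r/6))"
    "enat (card Y) = cover_num (r/6) (cball x r)" by blast
  have "nr (r/6) (cball x r) = real (card Y)" unfolding nr_def Y(3)[symmetric] by simp
  with Y n show ?thesis by (intro exI[of _ Y]) auto
qed

lemma M1: "1 \<le> M"
proof -
  have "1 \<le> nr (\<delta>/2/6) (cball x (\<delta>/2))" using Mb'[of "\<delta>/2"] \<delta>0 by (intro nr_pos) auto
  then show ?thesis using Mb'[of "\<delta>/2"] \<delta>0 by auto
qed

lemma fin: assumes "0 < r" "r < \<delta>" "0 < \<epsilon>" shows "cover_num \<epsilon> (ball x r) \<noteq> \<infinity>"
proof -
  have "\<forall>r. 0 < r \<and> r < \<delta> \<and> r \<le> 6^n * \<epsilon> \<longrightarrow> cover_num \<epsilon> (ball x r) \<noteq> \<infinity>" for n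
  proof (induction n)
    case 0
    show ?case
    proof (intro allI impI)
      fix r assume "0 < r \<and> r < \<delta> \<and> r \<le> 6^0 * \<epsilon>"
      then have "ball x r \<subseteq> ball x \<epsilon>" by auto
      then have "cover_num \<epsilon> (ball x r) \<le> 1" by (rule cn_small)
      then show "cover_num \<epsilon> (ball x r) \<noteq> \<infinity>" by (metis enat_ile one_enat_def enat.distinct(2))
    qed
  next
    case (Suc n)
    show ?case
    proof (intro allI impI)
      fix r assume r: "0 < r \<and> r < \<delta> \<and> r \<le> 6^Suc n * \<epsilon>"
      show "cover_num \<epsilon> (ball x r) \<noteq> \<infinity>"
      proof (cases "r/6 \<le> \<epsilon>")
        case True
        have "cover_num \<epsilon> (ball x r) \<le> cover_num (r/6) (ball x r)" using True by (rule cn_mono_rad)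
        also have "\<dots> \<le> cover_num (r/6) (cball x r)" by (rule cn_mono_set) auto
        finally show ?thesis using Mb'[of r] r enat_ile by fastforce
      next
        case False
        from Mcov[of r] r obtain Y where Y: "finite Y" "cball x r \<subseteq> (\<Union>y\<in>Y. ball y (r/6))" by auto
        have "ennreal_of_enat (cover_num \<epsilon> (ball x r)) \<le> of_nat (card Y) * ennreal c * ennreal_of_enat (cover_num \<epsilon> (ball x (r/6)))"
          using Ha Y(1) r False \<delta>a assms(3) Y(2)
          by (intro cn_comp[where a=a and R=r]) auto
        moreover have "cover_num \<epsilon> (ball x (r/6)) \<noteq> \<infinity>"
          using Suc.IH r by auto
        ultimately have "ennreal_of_enat (cover_num \<epsilon> (ball x r)) < top"
          by (auto simp: E_eq ennreal_of_nat_eq_real_of_nat ennreal_mult_less_top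
                   intro: le_less_trans)
        then show ?thesis by (metis ennreal_of_enat_infty infinity_ennreal_def less_irrefl)
      qed
    qed
  qed
  moreover obtain n where "r / \<epsilon> < 6^n" using real_arch_pow[of 6 "r/\<epsilon>"] by auto
  then have "r \<le> 6^n * \<epsilon>" using assms by (simp add: field_simps)
  ultimately show ?thesis using assms by blast
qed

end


context cctx begin

lemma U: assumes "0 < R" "R < \<delta>" "0 < s2" "s2 \<le> s1" "s1 \<le> R"
  shows "nr s2 (ball x R) \<le> nr s1 (ball x R) * c * nr s2 (ball x s1)"
proof -
  have f1: "cover_num s1 (ball x R) \<noteq> \<infinity>" using fin assms by auto
  have f2: "cover_num s2 (ball x s1) \<noteq> \<infinity>" using fin assms by auto
  have f3: "cover_num s2 (ball x R) \<noteq> \<infinity>" using fin assms by auto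
  from cn_attain[OF f1] obtain Y where Y: "finite Y" "ball x R \<subseteq> (\<Union>y\<in>Y. ball y s1)"
    "enat (card Y) = cover_num s1 (ball x R)" by blast
  have cY: "real (card Y) = nr s1 (ball x R)" unfolding nr_def Y(3)[symmetric] by simp
  have "ennreal_of_enat (cover_num s2 (ball x R)) \<le> of_nat (card Y) * ennreal c * ennreal_of_enat (cover_num s2 (ball x s1))"
    using assms Y \<delta>a by (intro cn_comp[OF Ha]) auto
  then have "ennreal (nr s2 (ball x R)) \<le> ennreal (nr s1 (ball x R)) * ennreal c * ennreal (nr s2 (ball x s1))"
    by (simp add: E_eq f2 f3 ennreal_of_nat_eq_real_of_nat cY)
  then show ?thesis using c1 nr_nonneg by (intro conv3) auto
qed

end


context cctx begin

lemma L1: assumes "0 < R" "R < \<delta>" "0 < s1" "6* s1 \<le> R"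
  shows "nr s1 (ball x R) \<le> M * c * nr s1 (ball x (R/2))"
proof -
  from Mcov[OF assms(1,2)] obtain Y where Y: "finite Y" "cball x R \<subseteq> (\<Union>y\<in>Y. ball y (R/6))" "real (card Y) \<le> M"
    by auto
  have f1: "cover_num s1 (ball x R) \<noteq> \<infinity>" using fin assms by auto
  have f2: "cover_num s1 (ball x (R/2)) \<noteq> \<infinity>" using fin assms by auto
  have f3: "cover_num s1 (ball x (R/6)) \<noteq> \<infinity>" and m: "nr s1 (ball x (R/6)) \<le> nr s1 (ball x (R/2))"
  proof -
    have sub: "ball x (R/6) \<subseteq> ball x (R/2)" using assms by (intro subset_ball) auto
    show "cover_num s1 (ball x (R/6)) \<noteq> \<infinity>" "nr s1 (ball x (R/6)) \<le> nr s1 (ball x (R/2))"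
      using nr_le_E[OF f2 cn_mono_set[OF sub]] by auto
  qed
  have "ennreal_of_enat (cover_num s1 (ball x R)) \<le> of_nat (card Y) * ennreal c * ennreal_of_enat (cover_num s1 (ball x (R/6)))"
    using assms Y \<delta>a by (intro cn_comp[OF Ha]) auto
  then have "ennreal (nr s1 (ball x R)) \<le> ennreal (real (card Y)) * ennreal c * ennreal (nr s1 (ball x (R/6)))"
    by (simp add: E_eq f1 f3 ennreal_of_nat_eq_real_of_nat)
  then have "nr s1 (ball x R) \<le> real (card Y) * c * nr s1 (ball x (R/6))"
    using c1 nr_nonneg by (intro conv3) auto
  also have "\<dots> \<le> M * c * nr s1 (ball x (R/2))"
    using Y(3) m c1 nr_nonneg by (intro mult_mono) auto
  finally show ?thesis .
qed

lemma Lpack: assumes "0 < R" "R < \<delta>" "0 < s1" "6* s1 \<le> R"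
  shows "\<exists>P. finite P \<and> P \<subseteq> ball x (R/2) \<and> (\<forall>p\<in>P. \<forall>q\<in>P. p \<noteq> q \<longrightarrow> 3* s1 \<le> dist p q)
            \<and> ball x (R/2) \<subseteq> (\<Union>p\<in>P. ball p (3* s1))"
proof -
  define sep where "sep P \<longleftrightarrow> P \<subseteq> ball x (R/2) \<and> (\<forall>p\<in>P. \<forall>q\<in>P. p \<noteq> q \<longrightarrow> 3* s1 \<le> dist p q)" for P
  have fz: "cover_num (3* s1/2) (ball x (R/2)) \<noteq> \<infinity>" using fin assms by auto
  from cn_attain[OF fz] obtain Z where Z: "finite Z" "ball x (R/2) \<subseteq> (\<Union>z\<in>Z. ball z (3* s1/2))" by blast
  have bnd: "finite P \<and> card P \<le> card Z" if sP: "sep P" for P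
  proof (rule finite_if_finite_subsets_card_bdd)
    fix G assume G: "G \<subseteq> P" "finite G"
    define f where "f g = (SOME z. z \<in> Z \<and> g \<in> ball z (3* s1/2))" for g
    have fz: "f g \<in> Z \<and> g \<in> ball (f g) (3* s1/2)" if "g \<in> G" for g
    proof -
      have "g \<in> ball x (R/2)" using that G sP unfolding sep_def by auto
      with Z(2) obtain z where "z \<in> Z" "g \<in> ball z (3* s1/2)" by blast
      then have "\<exists>z. z \<in> Z \<and> g \<in> ball z (3* s1/2)" by blast
      then show ?thesis unfolding f_def by (rule someI_ex)
    qed
    have "inj_on f G"
    proof (rule inj_onI)
      fix g g' assume g: "g \<in> G" "g' \<in> G" "f g = f g'"
      have "dist g g' \<le> dist (f g) g + dist (f g) g'" by (rule dist_triangle3)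
      also have "\<dots> < 3* s1" using fz[OF g(1)] fz[OF g(2)] g(3) by auto
      finally have "dist g g' < 3* s1" .
      then show "g = g'" using sP g G unfolding sep_def by force
    qed
    moreover have "f ` G \<subseteq> Z" using fz by auto
    ultimately show "card G \<le> card Z" using Z(1) by (metis card_inj_on_le)
  qed
  have "sep {}" unfolding sep_def by auto
  moreover have "\<forall>y. sep y \<longrightarrow> card y < Suc (card Z)" using bnd by (simp add: less_Suc_eq_le)
  ultimately obtain P where P: "sep P" and Pmax: "\<forall>P'. sep P' \<longrightarrow> card P' \<le> card P"
    using ex_has_greatest_nat[of sep "{}" card "Suc (card Z)"] by blast
  have fP: "finite P" using bnd[OF P(1)] by simp
  have cv: "ball x (R/2) \<subseteq> (\<Union>p\<in>P. ball p (3* s1))"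
  proof
    fix q assume q: "q \<in> ball x (R/2)"
    show "q \<in> (\<Union>p\<in>P. ball p (3* s1))"
    proof (rule ccontr)
      assume "q \<notin> (\<Union>p\<in>P. ball p (3* s1))"
      then have far: "\<forall>p\<in>P. 3* s1 \<le> dist p q" by auto
      then have qP: "q \<notin> P" using assms by force
      have "sep (insert q P)" using P(1) q far unfolding sep_def by (auto simp: dist_commute)
      then have "card (insert q P) \<le> card P" using Pmax by blast
      then show False using qP fP by simp
    qed
  qed
  have s1: "P \<subseteq> ball x (R/2)" and s2: "\<forall>p\<in>P. \<forall>q\<in>P. p \<noteq> q \<longrightarrow> 3* s1 \<le> dist p q"
    using P(1) unfolding sep_def by auto
  show ?thesis by (intro exI[of _ P] conjI fP s1 s2 cv)
qed

end


context cctx begin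

lemma L2: assumes "0 < R" "R < \<delta>" "0 < s1" "6 * s1 \<le> R" "finite P"
    "ball x (R/2) \<subseteq> (\<Union>p\<in>P. ball p (3 * s1))"
  shows "nr s1 (ball x (R/2)) \<le> real (card P) * c * M"
proof -
  have f1: "cover_num s1 (ball x (R/2)) \<noteq> \<infinity>" using fin assms by auto
  have mb: "cover_num (3 * s1/6) (cball x (3 * s1)) \<noteq> \<infinity> \<and> nr (3 * s1/6) (cball x (3 * s1)) < M"
    using Mb'[of "3 * s1"] assms by auto
  have "cover_num s1 (ball x (3 * s1)) \<le> cover_num (3 * s1/6) (ball x (3 * s1))"
    using assms by (intro cn_mono_rad) auto
  also have "\<dots> \<le> cover_num (3 * s1/6) (cball x (3 * s1))" by (rule cn_mono_set) auto
  finally have le: "cover_num s1 (ball x (3 * s1)) \<le> cover_num (3 * s1/6) (cball x (3 * s1))" .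
  have f2: "cover_num s1 (ball x (3 * s1)) \<noteq> \<infinity>" and m: "nr s1 (ball x (3 * s1)) \<le> M"
    using nr_le_rad[OF _ le] mb by auto
  have "ennreal_of_enat (cover_num s1 (ball x (R/2))) \<le> of_nat (card P) * ennreal c * ennreal_of_enat (cover_num s1 (ball x (3 * s1)))"
    using assms \<delta>a by (intro cn_comp[OF Ha, where R="R/2"]) auto
  then have "ennreal (nr s1 (ball x (R/2))) \<le> ennreal (real (card P)) * ennreal c * ennreal (nr s1 (ball x (3 * s1)))"
    by (simp add: E_eq f1 f2 ennreal_of_nat_eq_real_of_nat)
  then have "nr s1 (ball x (R/2)) \<le> real (card P) * c * nr s1 (ball x (3 * s1))"
    using c1 nr_nonneg by (intro conv3) auto
  also have "\<dots> \<le> real (card P) * c * M"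
    using m c1 by (intro mult_left_mono) auto
  finally show ?thesis .
qed

lemma L4: assumes "0 < R" "R < \<delta>" "0 < s2" "2 * s2 \<le> s1" "6 * s1 \<le> R" "finite P"
    "P \<subseteq> ball x (R/2)" "\<forall>p\<in>P. \<forall>q\<in>P. p \<noteq> q \<longrightarrow> 3 * s1 \<le> dist p q"
  shows "real (card P) * nr s2 (ball x s1) \<le> c * nr s2 (ball x R)"
proof -
  have f3: "cover_num s2 (ball x R) \<noteq> \<infinity>" using fin assms by auto
  have f2: "cover_num s2 (ball x s1) \<noteq> \<infinity>" using fin assms by auto
  from cn_attain[OF f3] obtain Q where Q: "finite Q" "ball x R \<subseteq> (\<Union>q\<in>Q. ball q s2)"
    "enat (card Q) = cover_num s2 (ball x R)" by blast
  have cQ: "real (card Q) = nr s2 (ball x R)" unfolding nr_def Q(3)[symmetric] by simp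
  define Qp where "Qp p = {q\<in>Q. ball q s2 \<inter> ball p s1 \<noteq> {}}" for p
  have fQp: "finite (Qp p)" for p using Q(1) unfolding Qp_def by auto
  have each: "nr s2 (ball x s1) \<le> c * real (card (Qp p))" if p: "p \<in> P" for p
  proof -
    have dp: "dist x p < R/2" using p assms(7) by auto
    have sub: "ball p s1 \<subseteq> ball x R"
    proof
      fix w assume "w \<in> ball p s1"
      then have "dist p w < s1" by auto
      then show "w \<in> ball x R" using dp assms dist_triangle[of x w p] by auto
    qed
    have cov: "ball p s1 \<subseteq> (\<Union>q\<in>Qp p. ball q s2)"
    proof
      fix w assume w: "w \<in> ball p s1"
      then obtain q where "q \<in> Q" "w \<in> ball q s2" using sub Q(2) by blast
      then show "w \<in> (\<Union>q\<in>Qp p. ball q s2)" using w unfolding Qp_def by blast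
    qed
    have cl: "cover_num s2 (ball p s1) \<le> enat (card (Qp p))" by (rule cn_le[OF fQp cov])
    then have fp: "cover_num s2 (ball p s1) \<noteq> \<infinity>" using enat_ile by fastforce
    have np: "nr s2 (ball p s1) \<le> real (card (Qp p))" using cl fp unfolding nr_def
      by (cases "cover_num s2 (ball p s1)") auto
    have e1: "(s1/R) * (s2/s1) * R = s2" using assms by (simp add: field_simps)
    have e2: "(s1/R) * R = s1" using assms by simp
    have "ennreal_of_enat (cover_num ((s1/R) * (s2/s1) * R) (ball x ((s1/R) * R)))
       \<le> ennreal c * ennreal_of_enat (cover_num ((s1/R) * (s2/s1) * R) (ball p ((s1/R) * R)))"
      using Ha[rule_format, of R "s1/R" "s2/s1" x p] assms dp \<delta>a by auto
    then have "ennreal_of_enat (cover_num s2 (ball x s1)) \<le> ennreal c * ennreal_of_enat (cover_num s2 (ball p s1))"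
      unfolding e1 e2 .
    then have "ennreal (nr s2 (ball x s1)) \<le> ennreal c * ennreal (nr s2 (ball p s1))"
      by (simp add: E_eq f2 fp)
    then have "ennreal (nr s2 (ball x s1)) \<le> ennreal (c * nr s2 (ball p s1))"
      using c1 nr_nonneg[of s2 "ball p s1"] by (simp add: ennreal_mult)
    then have "nr s2 (ball x s1) \<le> c * nr s2 (ball p s1)"
      using c1 nr_nonneg[of s2 "ball p s1"] by simp
    also have "\<dots> \<le> c * real (card (Qp p))" using np c1 by simp
    finally show ?thesis .
  qed
  have disj: "Qp p \<inter> Qp p' = {}" if "p \<in> P" "p' \<in> P" "p \<noteq> p'" for p p'
  proof (rule ccontr)
    assume "Qp p \<inter> Qp p' \<noteq> {}"
    then obtain q u u' where "dist q u < s2" "dist p u < s1" "dist q u' < s2" "dist p' u' < s1"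
      unfolding Qp_def by auto
    then have "dist p p' < 3 * s1"
      using assms dist_triangle[of p p' q] dist_triangle[of p q u] dist_triangle[of p' q u']
      by (auto simp: dist_commute)
    then show False using assms(8) that by force
  qed
  have "real (card P) * nr s2 (ball x s1) = (\<Sum>p\<in>P. nr s2 (ball x s1))" by simp
  also have "\<dots> \<le> (\<Sum>p\<in>P. c * real (card (Qp p)))" using each by (intro sum_mono) auto
  also have "\<dots> = c * real (\<Sum>p\<in>P. card (Qp p))" by (simp add: sum_distrib_left)
  also have "(\<Sum>p\<in>P. card (Qp p)) = card (\<Union>p\<in>P. Qp p)"
    using assms(6) fQp disj by (intro card_UN_disjoint[symmetric]) auto
  also have "card (\<Union>p\<in>P. Qp p) \<le> card Q" using Q(1) unfolding Qp_def by (intro card_mono) auto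
  then have "c * real (card (\<Union>p\<in>P. Qp p)) \<le> c * real (card Q)" using c1 by simp
  finally show ?thesis using cQ by simp
qed

end


lemma final_arith:
  fixes n1 n2 n3 c K M :: real
  assumes "1 \<le> n1" "1 \<le> n2" "1 \<le> n3" "1 \<le> c" "1 \<le> M" "1 \<le> K" "n3 \<le> n1 * c * n2"
    and "(n1 * n2 \<le> K * n3) \<or> (n1 \<le> M \<and> n2 \<le> n3) \<or> (n2 \<le> M \<and> n1 \<le> n3)"
  shows "\<bar>ln n3 - ln n2 - ln n1\<bar> \<le> ln c + ln K + ln M"
proof -
  have p: "0 < n1" "0 < n2" "0 < n3" "0 < c" "0 < M" "0 < K" using assms by auto
  have lc: "0 \<le> ln c" "0 \<le> ln K" "0 \<le> ln M" using assms by auto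
  have up: "ln n3 \<le> ln n1 + ln c + ln n2"
  proof -
    have "ln n3 \<le> ln (n1 * c * n2)" using assms(7) p by simp
    also have "\<dots> = ln n1 + ln c + ln n2" using p by (simp add: ln_mult)
    finally show ?thesis .
  qed
  have lo: "ln n2 + ln n1 \<le> ln n3 + ln K + ln M"
    using assms(8)
  proof (elim disjE conjE)
    assume h: "n1 * n2 \<le> K * n3"
    have "ln (n1 * n2) \<le> ln (K * n3)" using h p by simp
    then have "ln n1 + ln n2 \<le> ln K + ln n3" using p by (simp add: ln_mult)
    then show ?thesis using lc by linarith
  next
    assume "n1 \<le> M" "n2 \<le> n3"
    then have "ln n1 \<le> ln M" "ln n2 \<le> ln n3" using p by auto
    then show ?thesis using lc by linarith
  next
    assume "n2 \<le> M" "n1 \<le> n3"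
    then have "ln n2 \<le> ln M" "ln n1 \<le> ln n3" using p by auto
    then show ?thesis using lc by linarith
  qed
  show ?thesis using up lo lc by linarith
qed

context cctx begin

lemma L: assumes "0 < R" "R < \<delta>" "0 < s2" "2 * s2 \<le> s1" "6 * s1 \<le> R"
  shows "nr s1 (ball x R) * nr s2 (ball x s1) \<le> (M*M*c*c*c) * nr s2 (ball x R)"
proof -
  have s1: "0 < s1" using assms by auto
  from Lpack[OF assms(1,2) s1 assms(5)] obtain P where P: "finite P" "P \<subseteq> ball x (R/2)"
    "\<forall>p\<in>P. \<forall>q\<in>P. p \<noteq> q \<longrightarrow> 3 * s1 \<le> dist p q" "ball x (R/2) \<subseteq> (\<Union>p\<in>P. ball p (3 * s1))"
    by blast
  have a1: "nr s1 (ball x R) \<le> M * c * nr s1 (ball x (R/2))" using L1 assms s1 by auto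
  have a2: "nr s1 (ball x (R/2)) \<le> real (card P) * c * M" using L2[OF assms(1,2) s1 assms(5) P(1) P(4)] .
  have a4: "real (card P) * nr s2 (ball x s1) \<le> c * nr s2 (ball x R)" using L4[OF assms P(1-3)] .
  have M0: "0 \<le> M" using M1 by simp
  have n2: "0 \<le> nr s2 (ball x s1)" by (rule nr_nonneg)
  have "nr s1 (ball x R) * nr s2 (ball x s1) \<le> (M * c * nr s1 (ball x (R/2))) * nr s2 (ball x s1)"
    using a1 n2 by (rule mult_right_mono)
  also have "\<dots> \<le> (M * c * (real (card P) * c * M)) * nr s2 (ball x s1)"
    using a2 n2 M0 c1 by (intro mult_right_mono mult_left_mono) auto
  also have "\<dots> = (M * M * c * c) * (real (card P) * nr s2 (ball x s1))" by (simp add: algebra_simps)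
  also have "\<dots> \<le> (M * M * c * c) * (c * nr s2 (ball x R))"
    using a4 M0 c1 by (intro mult_left_mono) auto
  finally show ?thesis by (simp add: algebra_simps)
qed

end


theorem proposition4p5:
  fixes x :: "'a::metric_space"
  assumes a: "\<exists>c a. c \<ge> 1 \<and> 0 < a \<and> a \<le> 1 \<and>
      (\<forall>r l m y z. 0 < r \<and> r \<le> a \<and> 0 < l \<and> l \<le> 1 \<and> 0 < m \<and> m \<le> 1 \<and>
         y \<in> ball x r \<and> z \<in> ball x r \<longrightarrow>
         ennreal_of_enat (cover_num (l*m*r) (ball y (l*r)))
           \<le> ennreal c * ennreal_of_enat (cover_num (l*m*r) (ball z (l*r))))"
    and b: "\<forall>l>0. Limsup (at_right 0) (\<lambda>r. ennreal_of_enat (cover_num (l*r) (cball x r))) < \<infinity>"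
  shows "\<exists>t0 B. \<forall>t h k. t > t0 \<and> h > 0 \<and> k > 0 \<longrightarrow> \<bar>dg_fun x t h k\<bar> \<le> B"
proof -
  from a obtain c a where c1: "1 \<le> c" and a0: "0 < a" and Ha: "\<forall>r l m y z. 0 < r \<and> r \<le> a \<and> 0 < l \<and> l \<le> 1 \<and> 0 < m \<and> m \<le> 1 \<and>
         y \<in> ball x r \<and> z \<in> ball x r \<longrightarrow>
         ennreal_of_enat (cover_num (l*m*r) (ball y (l*r)))
           \<le> ennreal c * ennreal_of_enat (cover_num (l*m*r) (ball z (l*r)))" by blast
  have "Limsup (at_right 0) (\<lambda>r. ennreal_of_enat (cover_num ((1/6)*r) (cball x r))) < \<infinity>"
    using b[rule_format, of "1/6"] by simp
  from limsup_bound[OF this] obtain M \<delta>1 where d1: "0 < \<delta>1"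
    and Mb1: "\<forall>r. 0 < r \<and> r < \<delta>1 \<longrightarrow> ennreal_of_enat (cover_num ((1/6)*r) (cball x r)) < ennreal M"
    by blast
  define \<delta> where "\<delta> = min \<delta>1 (a/2)"
  have d0: "0 < \<delta>" and da: "2*\<delta> \<le> a" using d1 a0 unfolding \<delta>_def by auto
  have Mb: "\<forall>r. 0 < r \<and> r < \<delta> \<longrightarrow> ennreal_of_enat (cover_num ((1/6)*r) (cball x r)) < ennreal M"
    using Mb1 unfolding \<delta>_def by auto
  interpret cctx x c a M \<delta> using Ha c1 d0 da Mb by unfold_locales
  define K where "K = M*M*c*c*c"
  have M1': "1 \<le> M" by (rule M1)
  have "(1::real)*1*1*1*1 \<le> M*M*c*c*c" using M1' c1 by (intro mult_mono) auto
  then have K1: "1 \<le> K" unfolding K_def by simp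
  show ?thesis
  proof (intro exI allI impI)
    fix t h k :: real assume thk: "- ln \<delta> < t \<and> 0 < h \<and> 0 < k"
    define R where "R = exp (-t)"
    define s1 where "s1 = exp (-(t+h))"
    define s2 where "s2 = exp (-(t+h+k))"
    have "-t < ln \<delta>" using thk by linarith
    then have "exp (-t) < exp (ln \<delta>)" by (subst exp_less_cancel_iff)
    then have R0: "0 < R" "R < \<delta>" unfolding R_def using d0 by auto
    have s10: "0 < s1" "s1 \<le> R" unfolding s1_def R_def using thk by auto
    have s20: "0 < s2" "s2 \<le> s1" unfolding s2_def s1_def using thk by auto
    have f1: "cover_num s1 (ball x R) \<noteq> \<infinity>" using fin R0 s10 by auto
    have f2: "cover_num s2 (ball x s1) \<noteq> \<infinity>" using fin R0 s10 s20 by auto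
    have f3: "cover_num s2 (ball x R) \<noteq> \<infinity>" using fin R0 s20 by auto
    have n1: "1 \<le> nr s1 (ball x R)" using f1 R0 by (intro nr_pos) auto
    have n2: "1 \<le> nr s2 (ball x s1)" using f2 s10 by (intro nr_pos) auto
    have n3: "1 \<le> nr s2 (ball x R)" using f3 R0 by (intro nr_pos) auto
    have up: "nr s2 (ball x R) \<le> nr s1 (ball x R) * c * nr s2 (ball x s1)"
      using U R0 s10 s20 by auto
    have case3: "(nr s1 (ball x R) * nr s2 (ball x s1) \<le> K * nr s2 (ball x R))
      \<or> (nr s1 (ball x R) \<le> M \<and> nr s2 (ball x s1) \<le> nr s2 (ball x R))
      \<or> (nr s2 (ball x s1) \<le> M \<and> nr s1 (ball x R) \<le> nr s2 (ball x R))"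
    proof (cases "6 * s1 \<le> R")
      case False
      have "cover_num s1 (ball x R) \<le> cover_num (R/6) (ball x R)" using False by (intro cn_mono_rad) auto
      also have "\<dots> \<le> cover_num (R/6) (cball x R)" by (rule cn_mono_set) auto
      finally have "nr s1 (ball x R) \<le> nr (R/6) (cball x R)" using nr_le_rad Mb'[OF R0] by blast
      then have "nr s1 (ball x R) \<le> M" using Mb'[OF R0] by auto
      moreover have "nr s2 (ball x s1) \<le> nr s2 (ball x R)"
        using nr_le_E[OF f3 cn_mono_set[of "ball x s1" "ball x R"]] s10 subset_ball by blast
      ultimately show ?thesis by blast
    next
      case True
      show ?thesis
      proof (cases "2 * s2 \<le> s1")
        case True2: True
        have "nr s1 (ball x R) * nr s2 (ball x s1) \<le> K * nr s2 (ball x R)"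
          unfolding K_def using L R0 s20 True2 True by auto
        then show ?thesis by blast
      next
        case False
        have s1d: "s1 < \<delta>" using s10 R0 by auto
        have "cover_num s2 (ball x s1) \<le> cover_num (s1/6) (ball x s1)" using False s20 by (intro cn_mono_rad) auto
        also have "\<dots> \<le> cover_num (s1/6) (cball x s1)" by (rule cn_mono_set) auto
        finally have "nr s2 (ball x s1) \<le> nr (s1/6) (cball x s1)" using nr_le_rad Mb'[OF s10(1) s1d] by blast
        then have "nr s2 (ball x s1) \<le> M" using Mb'[OF s10(1) s1d] by auto
        moreover have "nr s1 (ball x R) \<le> nr s2 (ball x R)"
          using nr_le_rad[OF f3 cn_mono_rad[of s2 s1 "ball x R"]] s20 by auto
        ultimately show ?thesis by blast
      qed
    qed
    have "\<bar>ln (nr s2 (ball x R)) - ln (nr s2 (ball x s1)) - ln (nr s1 (ball x R))\<bar> \<le> ln c + ln K + ln M"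
      using n1 n2 n3 c1 M1' K1 up case3 by (intro final_arith) auto
    moreover have "dg_fun x t h k = ln (nr s2 (ball x R)) - ln (nr s2 (ball x s1)) - ln (nr s1 (ball x R))"
      unfolding dg_fun_def g_fun_def nr_def R_def s1_def s2_def by (simp add: add.assoc)
    ultimately show "\<bar>dg_fun x t h k\<bar> \<le> ln c + ln K + ln M" by simp
  qed
qed


end
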